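(* Let $(S,* )$ be a finite indecomposable cycle set of size $n$ whose permutation group $\mathcal G$ is abelian. Then $n=|\mathcal G|$.
   Context: A cycle set is a set $S$ with a binary operation $*$ such that each $t\mapsto s*t$ is bijective and $(s*t)*(s*u)=(t*s)*(t*u)$ for all $s,t,u$. Write $S=\{s_1,\dots,s_n\}$, let $\psi(s)\in\mathfrak S_n$ satisfy $s_i*s_j=s_{\psi(s_i)(j)}$, and $\mathcal G=\langle\psi(s_1),\dots,\psi(s_n)\rangle\le\mathfrak S_n$. $S$ is decomposable if there is a partition $S=X\sqcup Y$ with $X,Y$ nonempty and $\psi(s)(X)\subseteq X$, $\psi(s)(Y)\subseteq Y$ for all $s\in S$; otherwise it is indecomposable. *)

theory Defs
  imports Main
begin

definition cycle_set :: "'a set \<Rightarrow> ('a \<Rightarrow> 'a \<Rightarrow> 'a) \<Rightarrow> bool" where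
  "cycle_set S op \<longleftrightarrow>
     (\<forall>s\<in>S. bij_betw (op s) S S) \<and>
     (\<forall>s\<in>S. \<forall>t\<in>S. \<forall>u\<in>S. op (op s t) (op s u) = op (op t s) (op t u))"

definition psi :: "'a set \<Rightarrow> ('a \<Rightarrow> 'a \<Rightarrow> 'a) \<Rightarrow> 'a \<Rightarrow> ('a \<Rightarrow> 'a)" where
  "psi S op s = (\<lambda>x. if x \<in> S then op s x else x)"

definition psi_inv :: "'a set \<Rightarrow> ('a \<Rightarrow> 'a \<Rightarrow> 'a) \<Rightarrow> 'a \<Rightarrow> ('a \<Rightarrow> 'a)" where
  "psi_inv S op s = (\<lambda>x. if x \<in> S then inv_into S (op s) x else x)"

inductive_set perm_group :: "'a set \<Rightarrow> ('a \<Rightarrow> 'a \<Rightarrow> 'a) \<Rightarrow> ('a \<Rightarrow> 'a) set"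
  for S op where
  pg_id: "id \<in> perm_group S op"
| pg_gen: "s \<in> S \<Longrightarrow> g \<in> perm_group S op \<Longrightarrow> psi S op s \<circ> g \<in> perm_group S op"
| pg_inv: "s \<in> S \<Longrightarrow> g \<in> perm_group S op \<Longrightarrow> psi_inv S op s \<circ> g \<in> perm_group S op"

definition decomposable :: "'a set \<Rightarrow> ('a \<Rightarrow> 'a \<Rightarrow> 'a) \<Rightarrow> bool" where
  "decomposable S op \<longleftrightarrow>
     (\<exists>X Y. X \<noteq> {} \<and> Y \<noteq> {} \<and> X \<inter> Y = {} \<and> X \<union> Y = S \<and>
        (\<forall>s\<in>S. psi S op s ` X \<subseteq> X \<and> psi S op s ` Y \<subseteq> Y))"

definition indecomposable :: "'a set \<Rightarrow> ('a \<Rightarrow> 'a \<Rightarrow> 'a) \<Rightarrow> bool" where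
  "indecomposable S op \<longleftrightarrow> \<not> decomposable S op"

end

theory Submission
  imports Defs
begin

lemma pg_props:
  assumes cs: "cycle_set S op" and g: "g \<in> perm_group S op"
  shows "(\<forall>x. x \<notin> S \<longrightarrow> g x = x) \<and> (\<forall>x\<in>S. g x \<in> S)"
  using g
proof induction
  case pg_id
  then show ?case by simp
next
  case (pg_gen s g)
  have "bij_betw (op s) S S" using cs pg_gen(1) unfolding cycle_set_def by blast
  then have "\<forall>x\<in>S. op s x \<in> S" by (meson bij_betwE)
  then show ?case using pg_gen(3) by (auto simp: psi_def)
next
  case (pg_inv s g)
  have b: "bij_betw (op s) S S" using cs pg_inv(1) unfolding cycle_set_def by blast
  have "\<forall>x\<in>S. inv_into S (op s) x \<in> S"
    using b by (metis bij_betw_def inv_into_into)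
  then show ?case using pg_inv(3) by (auto simp: psi_inv_def)
qed

theorem mainTheorem8:
  fixes S :: "'a set" and op :: "'a \<Rightarrow> 'a \<Rightarrow> 'a" and n :: nat
  assumes "cycle_set S op"
    and "finite S" and "S \<noteq> {}" and "card S = n"
    and "indecomposable S op"
    and "\<forall>g\<in>perm_group S op. \<forall>h\<in>perm_group S op. g \<circ> h = h \<circ> g"
  shows "n = card (perm_group S op)"
proof -
  let ?G = "perm_group S op"
  obtain x0 where x0: "x0 \<in> S" using assms(3) by blast
  define Orb where "Orb = (\<lambda>g. g x0) ` ?G"
  have OS: "Orb \<subseteq> S" using pg_props[OF assms(1)] x0 unfolding Orb_def by blast
  have x0O: "x0 \<in> Orb" unfolding Orb_def using perm_group.pg_id[of S op] by (metis id_apply image_eqI)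
  have invO: "\<forall>s\<in>S. psi S op s ` Orb \<subseteq> Orb"
  proof (intro ballI subsetI)
    fix s y assume s: "s \<in> S" and "y \<in> psi S op s ` Orb"
    then obtain g where g: "g \<in> ?G" and y: "y = psi S op s (g x0)" unfolding Orb_def by auto
    have "psi S op s \<circ> g \<in> ?G" using pg_gen[OF s g] .
    then show "y \<in> Orb" unfolding Orb_def using y by (metis comp_apply image_eqI)
  qed
  have invY: "\<forall>s\<in>S. psi S op s ` (S - Orb) \<subseteq> S - Orb"
  proof (intro ballI subsetI)
    fix s y assume s: "s \<in> S" and "y \<in> psi S op s ` (S - Orb)"
    then obtain z where z: "z \<in> S" "z \<notin> Orb" and y: "y = psi S op s z" by auto
    have b: "bij_betw (op s) S S" using assms(1) s unfolding cycle_set_def by blast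
    have yS: "y \<in> S" using b z y unfolding psi_def by (auto dest: bij_betwE)
    show "y \<in> S - Orb"
    proof (rule ccontr)
      assume "y \<notin> S - Orb"
      then have "y \<in> Orb" using yS by blast
      then obtain g where g: "g \<in> ?G" and yg: "y = g x0" unfolding Orb_def by auto
      have "psi_inv S op s \<circ> g \<in> ?G" using pg_inv[OF s g] .
      moreover have "(psi_inv S op s \<circ> g) x0 = z"
        using yg y z yS b unfolding psi_inv_def psi_def
        by (simp add: bij_betw_def) (metis inv_into_f_f)
      ultimately have "z \<in> Orb" unfolding Orb_def by (metis image_eqI)
      then show False using z by blast
    qed
  qed
  have "S - Orb = {}"
  proof (rule ccontr)
    assume "S - Orb \<noteq> {}"
    then have "decomposable S op" unfolding decomposable_def
      using x0O OS invO invY by (intro exI[of _ Orb] exI[of _ "S - Orb"]) auto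
    then show False using assms(5) unfolding indecomposable_def by blast
  qed
  then have OeqS: "Orb = S" using OS by blast
  have inj: "inj_on (\<lambda>g. g x0) ?G"
  proof (rule inj_onI)
    fix g h assume g: "g \<in> ?G" and h: "h \<in> ?G" and e: "g x0 = h x0"
    show "g = h"
    proof
      fix x
      show "g x = h x"
      proof (cases "x \<in> S")
        case True
        then have "x \<in> Orb" using OeqS by simp
        then obtain k where k: "k \<in> ?G" and x: "x = k x0" unfolding Orb_def by auto
        have "g x = (g \<circ> k) x0" using x by simp
        also have "\<dots> = (k \<circ> g) x0" using assms(6) g k by metis
        also have "\<dots> = (k \<circ> h) x0" using e by simp
        also have "\<dots> = (h \<circ> k) x0" using assms(6) h k by metis
        also have "\<dots> = h x" using x by simp
        finally show ?thesis .
      next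
        case False
        then show ?thesis using pg_props[OF assms(1) g] pg_props[OF assms(1) h] by simp
      qed
    qed
  qed
  have "card Orb = card ?G" unfolding Orb_def using card_image[OF inj] .
  then show ?thesis using OeqS assms(4) by simp
qed

end
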